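(* If $\pi \in S_n$ then $\displaystyle \Delta_{\odot}([\pi]) = \sum_{\pi \overset{\bullet}=\pi'\pi''} [\pi']\otimes [\pi'']$ and $\epsilon_\odot([\pi]) = \begin{cases} 1 & \text{if }\ell(\pi)=0 \\ 0 & \text{if }\ell(\pi) \neq 0. \end{cases}$
   Context: Let $\Bbbk$ be a field. For a word (finite sequence of positive integers) $w=w_1\cdots w_m$ with $\max(w)\le n$, $[w,n]$ denotes the linear endomorphism of the $\Bbbk$-span of all words sending a word $v$ of length $n$ to $v_{w_1}\cdots v_{w_m}$ and other words to $0$. Define $\Delta_\odot([w,n])=\sum_{i=0}^m [w_1\cdots w_i,n]\otimes[w_{i+1}\cdots w_m,n]$ and $\epsilon_\odot([w,n])=1$ if $w=\emptyset$, else $0$, extended linearly. For $\pi\in S_n$ (generated by $s_i=(i,i+1)$), $\mathcal{R}(\pi)$ is the set of reduced words, $\ell(\pi)$ the length, and $[\pi]=\sum_{w\in\mathcal{R}(\pi)}[w,n-1]$. Write $\pi\overset{\bullet}=\pi'\pi''$ if $\pi',\pi''\in S_n$, $\pi=\pi'\pi''$ and $\ell(\pi)=\ell(\pi')+\ell(\pi'')$. *)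

theory Defs
  imports "HOL-Combinatorics.Permutations"
begin

text \<open>The basis element [w,n] of the span is indexed by the pair (w,n) (with max w \<le> n).
  Elements of the span are represented by their coefficient functions on this basis;
  elements of the tensor square by coefficient functions on pairs of basis indices.\<close>

type_synonym basis_idx = "nat list \<times> nat"

definition bas :: "nat list \<Rightarrow> nat \<Rightarrow> basis_idx \<Rightarrow> 'k::field" where
  "bas w n = (\<lambda>x. if x = (w, n) then 1 else 0)"

definition tensor :: "(basis_idx \<Rightarrow> 'k::field) \<Rightarrow> (basis_idx \<Rightarrow> 'k) \<Rightarrow> (basis_idx \<times> basis_idx \<Rightarrow> 'k)" where
  "tensor f g = (\<lambda>(x, y). f x * g y)"

definition Delta_bas :: "basis_idx \<Rightarrow> (basis_idx \<times> basis_idx \<Rightarrow> 'k::field)" where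
  "Delta_bas b = (\<lambda>p. \<Sum>i\<in>{0..length (fst b)}.
      tensor (bas (take i (fst b)) (snd b)) (bas (drop i (fst b)) (snd b)) p)"

text \<open>Linear extension (for finitely supported coefficient functions).\<close>
definition Delta_odot :: "(basis_idx \<Rightarrow> 'k::field) \<Rightarrow> (basis_idx \<times> basis_idx \<Rightarrow> 'k)" where
  "Delta_odot f = (\<lambda>p. \<Sum>x\<in>{x. f x \<noteq> 0}. f x * Delta_bas x p)"

definition eps_odot :: "(basis_idx \<Rightarrow> 'k::field) \<Rightarrow> 'k" where
  "eps_odot f = (\<Sum>x\<in>{x. f x \<noteq> 0}. f x * (if fst x = [] then 1 else 0))"

definition s :: "nat \<Rightarrow> nat \<Rightarrow> nat" where
  "s i = transpose i (Suc i)"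

definition word_prod :: "nat list \<Rightarrow> nat \<Rightarrow> nat" where
  "word_prod w = foldr (\<lambda>i f. s i \<circ> f) w id"

definition sn_word :: "nat \<Rightarrow> nat list \<Rightarrow> bool" where
  "sn_word n w \<longleftrightarrow> set w \<subseteq> {1..<n}"

definition len :: "nat \<Rightarrow> (nat \<Rightarrow> nat) \<Rightarrow> nat" where
  "len n \<pi> = (LEAST m. \<exists>w. sn_word n w \<and> length w = m \<and> word_prod w = \<pi>)"

definition reduced_words :: "nat \<Rightarrow> (nat \<Rightarrow> nat) \<Rightarrow> nat list set" where
  "reduced_words n \<pi> = {w. sn_word n w \<and> word_prod w = \<pi> \<and> length w = len n \<pi>}"

definition perm_elem :: "nat \<Rightarrow> (nat \<Rightarrow> nat) \<Rightarrow> basis_idx \<Rightarrow> 'k::field" where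
  "perm_elem n \<pi> = (\<lambda>x. \<Sum>w\<in>reduced_words n \<pi>. bas w (n - 1) x)"

end

theory Submission
  imports Defs
begin

lemma wp_append: "word_prod (u @ v) = word_prod u \<circ> word_prod v"
  by (induction u) (auto simp: word_prod_def)

lemma wp_Nil: "word_prod [] = id"
  by (simp add: word_prod_def)

lemma wp_Cons: "word_prod (a # w) = s a \<circ> word_prod w"
  by (simp add: word_prod_def)

lemma sn_append: "sn_word n (u @ v) \<longleftrightarrow> sn_word n u \<and> sn_word n v"
  by (auto simp: sn_word_def)

lemma wp_permutes: "sn_word n w \<Longrightarrow> word_prod w permutes {1..n}"
proof (induction w)
  case Nil
  then show ?case by (metis wp_Nil permutes_id)
next
  case (Cons a w)
  then have a: "a \<in> {1..<n}" and "sn_word n w" by (auto simp: sn_word_def)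
  have "s a permutes {1..n}" unfolding s_def
    using a by (intro permutes_swap_id) auto
  then show ?case using Cons `sn_word n w` by (metis wp_Cons permutes_compose)
qed

lemma len_le: "sn_word n w \<Longrightarrow> len n (word_prod w) \<le> length w"
  unfolding len_def by (rule Least_le) blast

lemma len_ex: assumes "sn_word n w"
  shows "\<exists>w'. sn_word n w' \<and> length w' = len n (word_prod w) \<and> word_prod w' = word_prod w"
proof -
  have "\<exists>m. \<exists>w'. sn_word n w' \<and> length w' = m \<and> word_prod w' = word_prod w" using assms by blast
  from LeastI_ex[OF this] show ?thesis unfolding len_def .
qed

lemma transp_word: "1 \<le> a \<Longrightarrow> a < b \<Longrightarrow> b \<le> n \<Longrightarrow> \<exists>w. sn_word n w \<and> word_prod w = transpose a b"
proof (induction "b - a" arbitrary: a)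
  case 0 then show ?case by simp
next
  case (Suc k)
  show ?case
  proof (cases "Suc a = b")
    case True
    then show ?thesis using Suc.prems
      by (intro exI[of _ "[a]"]) (auto simp: sn_word_def word_prod_def s_def)
  next
    case False
    then obtain w where w: "sn_word n w" "word_prod w = transpose (Suc a) b"
      using Suc by (metis Suc_diff_Suc Suc_leD Suc_lessI diff_Suc_1 le_SucI nat.inject)
    have eq: "transpose a b = s a \<circ> transpose (Suc a) b \<circ> s a"
      using False Suc.prems by (auto simp: s_def transpose_def fun_eq_iff)
    show ?thesis using w Suc.prems False
      by (intro exI[of _ "a # w @ [a]"]) (auto simp: sn_word_def wp_Cons wp_append eq wp_Nil o_assoc)
  qed
qed

lemma gen: assumes "\<pi> permutes {1..n}" shows "\<exists>w. sn_word n w \<and> word_prod w = \<pi>"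
  using assms finite_atLeastAtMost[of 1 n]
proof (induction rule: permutes_induct)
  case id
  then show ?case by (intro exI[of _ "[]"]) (simp add: sn_word_def word_prod_def)
next
  case (swap a b p)
  then obtain w where w: "sn_word n w" "word_prod w = p" by blast
  have "\<exists>v. sn_word n v \<and> word_prod v = transpose a b"
  proof (cases "a < b")
    case True then show ?thesis using swap transp_word by auto
  next
    case False then have "b < a" using swap by auto
    then show ?thesis using swap transp_word[of b a n] by (auto simp: transpose_commute)
  qed
  then obtain v where "sn_word n v" "word_prod v = transpose a b" by blast
  then show ?case using w by (intro exI[of _ "v @ w"]) (simp add: sn_append wp_append)
qed

lemma finite_R: "finite (reduced_words n \<pi>)"
proof (rule finite_subset)
  show "reduced_words n \<pi> \<subseteq> {w. set w \<subseteq> {1..<n} \<and> length w = len n \<pi>}"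
    by (auto simp: reduced_words_def sn_word_def)
  show "finite {w. set w \<subseteq> {1..<n} \<and> length w = len n \<pi>}"
    by (rule finite_lists_length_eq) simp
qed

lemma pe_eq: "perm_elem n \<pi> x = (if fst x \<in> reduced_words n \<pi> \<and> snd x = n - 1 then 1 else 0)"
proof -
  have "perm_elem n \<pi> x = (\<Sum>w\<in>reduced_words n \<pi>. if fst x = w then (if snd x = n - 1 then 1 else 0) else 0)"
    unfolding perm_elem_def bas_def by (intro sum.cong) (auto simp: prod_eq_iff)
  also have "\<dots> = (if fst x \<in> reduced_words n \<pi> \<and> snd x = n - 1 then 1 else 0)"
    using finite_R[of n \<pi>] by (simp add: sum.delta)
  finally show ?thesis .
qed

lemma key:
  "u @ v \<in> reduced_words n \<pi> \<longleftrightarrow>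
   (word_prod u permutes {1..n} \<and> word_prod v permutes {1..n} \<and> \<pi> = word_prod u \<circ> word_prod v \<and>
     len n \<pi> = len n (word_prod u) + len n (word_prod v)) \<and>
   u \<in> reduced_words n (word_prod u) \<and> v \<in> reduced_words n (word_prod v)"
proof
  assume h: "u @ v \<in> reduced_words n \<pi>"
  then have su: "sn_word n u" and sv: "sn_word n v" and pi: "\<pi> = word_prod u \<circ> word_prod v"
    and l: "length u + length v = len n \<pi>"
    by (auto simp: reduced_words_def sn_append wp_append)
  have lu: "len n (word_prod u) \<le> length u" using len_le[OF su] .
  have lv: "len n (word_prod v) \<le> length v" using len_le[OF sv] .
  obtain u' where u': "sn_word n u'" "length u' = len n (word_prod u)" "word_prod u' = word_prod u"
    using len_ex[OF su] by blast
  obtain v' where v': "sn_word n v'" "length v' = len n (word_prod v)" "word_prod v' = word_prod v"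
    using len_ex[OF sv] by blast
  have "sn_word n (u' @ v')" using u' v' by (simp add: sn_append)
  from len_le[OF this] have "len n \<pi> \<le> len n (word_prod u) + len n (word_prod v)"
    using u' v' pi by (simp add: wp_append)
  then have e1: "len n (word_prod u) = length u" "len n (word_prod v) = length v" using l lu lv by linarith+
  show "(word_prod u permutes {1..n} \<and> word_prod v permutes {1..n} \<and> \<pi> = word_prod u \<circ> word_prod v \<and>
     len n \<pi> = len n (word_prod u) + len n (word_prod v)) \<and>
   u \<in> reduced_words n (word_prod u) \<and> v \<in> reduced_words n (word_prod v)"
    using su sv pi l e1 wp_permutes[OF su] wp_permutes[OF sv] by (auto simp: reduced_words_def)
next
  assume "(word_prod u permutes {1..n} \<and> word_prod v permutes {1..n} \<and> \<pi> = word_prod u \<circ> word_prod v \<and>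
     len n \<pi> = len n (word_prod u) + len n (word_prod v)) \<and>
   u \<in> reduced_words n (word_prod u) \<and> v \<in> reduced_words n (word_prod v)"
  then show "u @ v \<in> reduced_words n \<pi>"
    by (auto simp: reduced_words_def sn_append wp_append)
qed

lemma inner_sum:
  "(\<Sum>i\<in>{0..length w}. if u = take i w \<and> v = drop i w \<and> c then (1::'k::field) else 0)
    = (if w = u @ v \<and> c then 1 else 0)"
proof (cases "w = u @ v")
  case True
  have "(\<Sum>i\<in>{0..length w}. if u = take i w \<and> v = drop i w \<and> c then (1::'k) else 0)
     = (\<Sum>i\<in>{0..length w}. if i = length u then (if c then 1 else 0) else 0)"
  proof (intro sum.cong refl)
    fix i assume i: "i \<in> {0..length w}"
    have "(u = take i w \<and> v = drop i w) \<longleftrightarrow> i = length u"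
    proof
      assume "u = take i w \<and> v = drop i w"
      moreover have "length (take i w) = i" using i by simp
      ultimately show "i = length u" by metis
    qed (use True in simp)
    then show "(if u = take i w \<and> v = drop i w \<and> c then (1::'k) else 0)
       = (if i = length u then (if c then 1 else 0) else 0)" using True by auto
  qed
  also have "\<dots> = (if c then 1 else 0)" using True by simp
  finally show ?thesis using True by simp
next
  case False
  have "(\<Sum>i\<in>{0..length w}. if u = take i w \<and> v = drop i w \<and> c then (1::'k) else 0)
     = (\<Sum>i\<in>{0..length w}. 0)"
    using False by (intro sum.cong) auto
  then show ?thesis using False by simp
qed

theorem corollary4p2:
  fixes \<pi> :: "nat \<Rightarrow> nat" and n :: nat
  assumes "\<pi> permutes {1..n}"
  shows "Delta_odot (perm_elem n \<pi> :: basis_idx \<Rightarrow> 'k::field) =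
           (\<lambda>p. \<Sum>(\<sigma>, \<tau>)\<in>{(\<sigma>, \<tau>). \<sigma> permutes {1..n} \<and> \<tau> permutes {1..n} \<and>
                              \<pi> = \<sigma> \<circ> \<tau> \<and> len n \<pi> = len n \<sigma> + len n \<tau>}.
                  tensor (perm_elem n \<sigma>) (perm_elem n \<tau>) p) \<and>
         eps_odot (perm_elem n \<pi> :: basis_idx \<Rightarrow> 'k::field) = (if len n \<pi> = 0 then 1 else 0)"
proof
  define m where "m = n - 1"
  define R where "R = reduced_words n \<pi>"
  define P where "P = {(\<sigma>, \<tau>). \<sigma> permutes {1..n} \<and> \<tau> permutes {1..n} \<and>
                              \<pi> = \<sigma> \<circ> \<tau> \<and> len n \<pi> = len n \<sigma> + len n \<tau>}"
  have finR: "finite R" unfolding R_def by (rule finite_R)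
  have supp: "{x. (perm_elem n \<pi> x :: 'k) \<noteq> 0} = (\<lambda>w. (w, m)) ` R"
    by (auto simp: pe_eq R_def m_def)
  have finP: "finite P"
  proof (rule finite_subset)
    show "P \<subseteq> {\<sigma>. \<sigma> permutes {1..n}} \<times> {\<tau>. \<tau> permutes {1..n}}" by (auto simp: P_def)
    show "finite ({\<sigma>. \<sigma> permutes {1..n}} \<times> {\<tau>. \<tau> permutes {1..n}})"
      by (intro finite_cartesian_product finite_permutations) auto
  qed
  show "Delta_odot (perm_elem n \<pi> :: basis_idx \<Rightarrow> 'k::field) =
           (\<lambda>p. \<Sum>(\<sigma>, \<tau>)\<in>{(\<sigma>, \<tau>). \<sigma> permutes {1..n} \<and> \<tau> permutes {1..n} \<and>
                              \<pi> = \<sigma> \<circ> \<tau> \<and> len n \<pi> = len n \<sigma> + len n \<tau>}.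
                  tensor (perm_elem n \<sigma>) (perm_elem n \<tau>) p)"
    unfolding P_def[symmetric]
  proof (rule ext)
    fix p :: "basis_idx \<times> basis_idx"
    obtain u a v b where p: "p = ((u, a), (v, b))" by (metis prod.exhaust)
    let ?c = "a = m \<and> b = m"
    have "Delta_odot (perm_elem n \<pi> :: basis_idx \<Rightarrow> 'k) p
        = (\<Sum>x\<in>(\<lambda>w. (w, m)) ` R. perm_elem n \<pi> x * Delta_bas x p)"
      unfolding Delta_odot_def supp ..
    also have "\<dots> = (\<Sum>w\<in>R. (perm_elem n \<pi> (w, m) :: 'k) * Delta_bas (w, m) p)"
      by (subst sum.reindex) (auto simp: inj_on_def)
    also have "\<dots> = (\<Sum>w\<in>R. (\<Sum>i\<in>{0..length w}. if u = take i w \<and> v = drop i w \<and> ?c then (1::'k) else 0))"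
      by (intro sum.cong) (auto simp: pe_eq R_def m_def Delta_bas_def tensor_def bas_def p intro!: sum.cong)
    also have "\<dots> = (\<Sum>w\<in>R. if w = u @ v \<and> ?c then (1::'k) else 0)"
      by (simp only: inner_sum)
    also have "\<dots> = (if u @ v \<in> R \<and> ?c then 1 else 0)"
      using finR by (cases "a = m"; cases "b = m") (simp_all add: sum.delta')
    finally have L: "Delta_odot (perm_elem n \<pi> :: basis_idx \<Rightarrow> 'k) p = (if u @ v \<in> R \<and> ?c then 1 else 0)" .
    have "(\<Sum>(\<sigma>, \<tau>)\<in>P. tensor (perm_elem n \<sigma>) (perm_elem n \<tau>) p :: 'k)
       = (\<Sum>x\<in>P. if x = (word_prod u, word_prod v) then
             (if u \<in> reduced_words n (word_prod u) \<and> v \<in> reduced_words n (word_prod v) \<and> ?c then 1 else 0) else 0)"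
      by (intro sum.cong refl) (auto simp: tensor_def pe_eq p m_def reduced_words_def split: if_splits)
    also have "\<dots> = (if (word_prod u, word_prod v) \<in> P \<and> u \<in> reduced_words n (word_prod u) \<and> v \<in> reduced_words n (word_prod v) \<and> ?c then 1 else 0)"
      using finP by (auto simp: sum.delta')
    also have "\<dots> = (if u @ v \<in> R \<and> ?c then 1 else 0)"
      using key[of u v n \<pi>] by (auto simp: P_def R_def)
    finally show "Delta_odot (perm_elem n \<pi> :: basis_idx \<Rightarrow> 'k) p =
        (\<Sum>(\<sigma>, \<tau>)\<in>P. tensor (perm_elem n \<sigma>) (perm_elem n \<tau>) p)" using L by simp
  qed
  have "eps_odot (perm_elem n \<pi> :: basis_idx \<Rightarrow> 'k) = (\<Sum>x\<in>(\<lambda>w. (w, m)) ` R. perm_elem n \<pi> x * (if fst x = [] then (1::'k) else 0))"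
    unfolding eps_odot_def supp ..
  also have "\<dots> = (\<Sum>w\<in>R. if w = [] then (1::'k) else 0)"
    by (subst sum.reindex) (auto simp: inj_on_def pe_eq R_def m_def intro!: sum.cong)
  also have "\<dots> = (if [] \<in> R then 1 else 0)"
    using finR by (simp add: sum.delta')
  also have "\<dots> = (if len n \<pi> = 0 then 1 else 0)"
  proof -
    obtain w where w: "sn_word n w" "word_prod w = \<pi>" using gen[OF assms] by blast
    obtain w' where w': "sn_word n w'" "length w' = len n \<pi>" "word_prod w' = \<pi>"
      using len_ex[OF w(1)] w(2) by auto
    have "[] \<in> R \<longleftrightarrow> len n \<pi> = 0"
      using w' by (auto simp: R_def reduced_words_def sn_word_def wp_Nil)
    then show ?thesis by simp
  qed
  finally show "eps_odot (perm_elem n \<pi> :: basis_idx \<Rightarrow> 'k::field) = (if len n \<pi> = 0 then 1 else 0)" .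
qed

end
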